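(* Let $(\mathbb{X},\dagger)$ be a Moore-Penrose dagger additive category. If $\begin{bmatrix}\alpha&\beta\\ \beta^\dagger&\delta\end{bmatrix}:B\oplus C\to B\oplus C$ is $\dagger$-positive, then $m=\beta^\dagger\circ\alpha^\circ$ is a conditional generator of it, where $\alpha^\circ$ is the Moore-Penrose inverse of $\alpha$.
   Context: A dagger additive category is a dagger category (contravariant identity-on-objects involutive functor $\dagger$) whose hom-sets are abelian groups with bilinear composition and additive $\dagger$, having a zero object and finite biproducts whose projections $\pi_j$ and injections $\iota_j$ satisfy $\pi_j^\dagger=\iota_j$. Maps between biproducts are written as matrices; composition is matrix multiplication and $\dagger$ is transpose with entrywise $\dagger$. An endomorphism $p$ is $\dagger$-positive if $p=\phi^\dagger\circ\phi$ for some map $\phi$. A Moore-Penrose inverse of $f:A\to B$ is a map $f^\circ:B\to A$ with $f f^\circ f=f$, $f^\circ f f^\circ=f^\circ$, $(f f^\circ)^\dagger=f f^\circ$, $(f^\circ f)^\dagger=f^\circ f$ (it is unique when it exists); a Moore-Penrose dagger additive category is one in which every map has a Moore-Penrose inverse. A conditional generator for a $\dagger$-positive map $\begin{bmatrix}\alpha&\beta\\ \beta^\dagger&\delta\end{bmatrix}:B\oplus C\to B\oplus C$ (with $\alpha:B\to B$, $\beta:C\to B$, $\delta:C\to C$) is a map $m:B\to C$ with (i) $m\circ\alpha=\beta^\dagger$ and (ii) $\delta-m\circ\beta$ is $\dagger$-positive. *)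

theory Defs
  imports Main
begin

text \<open>A category presented by objects, arrows, domain/codomain, composition
 (dc_cmp g f = g after f), identities, together with a dagger, abelian group
 structure on hom-sets, a zero object and chosen binary biproducts.
 (Binary biproducts plus a zero object give all finite biproducts.)\<close>

record ('o, 'm) dac =
  dc_Obj :: "'o set"
  dc_Arr :: "'m set"
  dc_dom :: "'m \<Rightarrow> 'o"
  dc_cod :: "'m \<Rightarrow> 'o"
  dc_cmp :: "'m \<Rightarrow> 'm \<Rightarrow> 'm"
  dc_id :: "'o \<Rightarrow> 'm"
  dc_dag :: "'m \<Rightarrow> 'm"
  dc_plus :: "'m \<Rightarrow> 'm \<Rightarrow> 'm"
  dc_neg :: "'m \<Rightarrow> 'm"
  dc_zero :: "'o \<Rightarrow> 'o \<Rightarrow> 'm"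
  dc_zobj :: "'o"
  dc_bip :: "'o \<Rightarrow> 'o \<Rightarrow> 'o"
  dc_prj1 :: "'o \<Rightarrow> 'o \<Rightarrow> 'm"
  dc_prj2 :: "'o \<Rightarrow> 'o \<Rightarrow> 'm"
  dc_inj1 :: "'o \<Rightarrow> 'o \<Rightarrow> 'm"
  dc_inj2 :: "'o \<Rightarrow> 'o \<Rightarrow> 'm"

definition dc_hom :: "('o, 'm, 'z) dac_scheme \<Rightarrow> 'o \<Rightarrow> 'o \<Rightarrow> 'm set" where
  "dc_hom X A B = {f \<in> dc_Arr X. dc_dom X f = A \<and> dc_cod X f = B}"

definition is_category :: "('o, 'm, 'z) dac_scheme \<Rightarrow> bool" where
  "is_category X \<longleftrightarrow>
     (\<forall>f \<in> dc_Arr X. dc_dom X f \<in> dc_Obj X \<and> dc_cod X f \<in> dc_Obj X) \<and>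
     (\<forall>A \<in> dc_Obj X. dc_id X A \<in> dc_hom X A A) \<and>
     (\<forall>A \<in> dc_Obj X. \<forall>B \<in> dc_Obj X. \<forall>C \<in> dc_Obj X. \<forall>f \<in> dc_hom X A B. \<forall>g \<in> dc_hom X B C.
        dc_cmp X g f \<in> dc_hom X A C) \<and>
     (\<forall>A \<in> dc_Obj X. \<forall>B \<in> dc_Obj X. \<forall>C \<in> dc_Obj X. \<forall>D \<in> dc_Obj X.
        \<forall>f \<in> dc_hom X A B. \<forall>g \<in> dc_hom X B C. \<forall>h \<in> dc_hom X C D.
        dc_cmp X h (dc_cmp X g f) = dc_cmp X (dc_cmp X h g) f) \<and>
     (\<forall>A \<in> dc_Obj X. \<forall>B \<in> dc_Obj X. \<forall>f \<in> dc_hom X A B.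
        dc_cmp X (dc_id X B) f = f \<and> dc_cmp X f (dc_id X A) = f)"

definition is_dagger :: "('o, 'm, 'z) dac_scheme \<Rightarrow> bool" where
  "is_dagger X \<longleftrightarrow>
     (\<forall>A \<in> dc_Obj X. \<forall>B \<in> dc_Obj X. \<forall>f \<in> dc_hom X A B.
        dc_dag X f \<in> dc_hom X B A \<and> dc_dag X (dc_dag X f) = f) \<and>
     (\<forall>A \<in> dc_Obj X. dc_dag X (dc_id X A) = dc_id X A) \<and>
     (\<forall>A \<in> dc_Obj X. \<forall>B \<in> dc_Obj X. \<forall>C \<in> dc_Obj X. \<forall>f \<in> dc_hom X A B. \<forall>g \<in> dc_hom X B C.
        dc_dag X (dc_cmp X g f) = dc_cmp X (dc_dag X f) (dc_dag X g))"

definition is_additive_hom :: "('o, 'm, 'z) dac_scheme \<Rightarrow> bool" where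
  "is_additive_hom X \<longleftrightarrow>
     (\<forall>A \<in> dc_Obj X. \<forall>B \<in> dc_Obj X.
        dc_zero X A B \<in> dc_hom X A B \<and>
        (\<forall>f \<in> dc_hom X A B. dc_neg X f \<in> dc_hom X A B \<and>
            dc_plus X f (dc_zero X A B) = f \<and>
            dc_plus X f (dc_neg X f) = dc_zero X A B) \<and>
        (\<forall>f \<in> dc_hom X A B. \<forall>g \<in> dc_hom X A B.
            dc_plus X f g \<in> dc_hom X A B \<and> dc_plus X f g = dc_plus X g f \<and>
            dc_dag X (dc_plus X f g) = dc_plus X (dc_dag X f) (dc_dag X g)) \<and>
        (\<forall>f \<in> dc_hom X A B. \<forall>g \<in> dc_hom X A B. \<forall>h \<in> dc_hom X A B.
            dc_plus X (dc_plus X f g) h = dc_plus X f (dc_plus X g h))) \<and>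
     (\<forall>A \<in> dc_Obj X. \<forall>B \<in> dc_Obj X. \<forall>C \<in> dc_Obj X.
        \<forall>f \<in> dc_hom X A B. \<forall>f' \<in> dc_hom X A B. \<forall>g \<in> dc_hom X B C. \<forall>g' \<in> dc_hom X B C.
          dc_cmp X g (dc_plus X f f') = dc_plus X (dc_cmp X g f) (dc_cmp X g f') \<and>
          dc_cmp X (dc_plus X g g') f = dc_plus X (dc_cmp X g f) (dc_cmp X g' f))"

definition has_zero_object :: "('o, 'm, 'z) dac_scheme \<Rightarrow> bool" where
  "has_zero_object X \<longleftrightarrow> dc_zobj X \<in> dc_Obj X \<and>
     (\<forall>A \<in> dc_Obj X. dc_hom X (dc_zobj X) A = {dc_zero X (dc_zobj X) A} \<and>
                     dc_hom X A (dc_zobj X) = {dc_zero X A (dc_zobj X)})"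

definition has_dagger_biproducts :: "('o, 'm, 'z) dac_scheme \<Rightarrow> bool" where
  "has_dagger_biproducts X \<longleftrightarrow>
     (\<forall>A \<in> dc_Obj X. \<forall>B \<in> dc_Obj X.
        dc_bip X A B \<in> dc_Obj X \<and>
        dc_prj1 X A B \<in> dc_hom X (dc_bip X A B) A \<and>
        dc_prj2 X A B \<in> dc_hom X (dc_bip X A B) B \<and>
        dc_inj1 X A B \<in> dc_hom X A (dc_bip X A B) \<and>
        dc_inj2 X A B \<in> dc_hom X B (dc_bip X A B) \<and>
        dc_cmp X (dc_prj1 X A B) (dc_inj1 X A B) = dc_id X A \<and>
        dc_cmp X (dc_prj2 X A B) (dc_inj2 X A B) = dc_id X B \<and>
        dc_cmp X (dc_prj1 X A B) (dc_inj2 X A B) = dc_zero X B A \<and>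
        dc_cmp X (dc_prj2 X A B) (dc_inj1 X A B) = dc_zero X A B \<and>
        dc_plus X (dc_cmp X (dc_inj1 X A B) (dc_prj1 X A B))
                  (dc_cmp X (dc_inj2 X A B) (dc_prj2 X A B)) = dc_id X (dc_bip X A B) \<and>
        dc_dag X (dc_prj1 X A B) = dc_inj1 X A B \<and>
        dc_dag X (dc_prj2 X A B) = dc_inj2 X A B)"

definition dagger_additive_category :: "('o, 'm, 'z) dac_scheme \<Rightarrow> bool" where
  "dagger_additive_category X \<longleftrightarrow> is_category X \<and> is_dagger X \<and> is_additive_hom X \<and>
     has_zero_object X \<and> has_dagger_biproducts X"

definition dagger_positive :: "('o, 'm, 'z) dac_scheme \<Rightarrow> 'o \<Rightarrow> 'm \<Rightarrow> bool" where
  "dagger_positive X A p \<longleftrightarrow>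
     (\<exists>D \<in> dc_Obj X. \<exists>\<phi> \<in> dc_hom X A D. p = dc_cmp X (dc_dag X \<phi>) \<phi>)"

definition mp_inverse :: "('o, 'm, 'z) dac_scheme \<Rightarrow> 'm \<Rightarrow> 'm \<Rightarrow> bool" where
  "mp_inverse X f g \<longleftrightarrow>
     g \<in> dc_hom X (dc_cod X f) (dc_dom X f) \<and>
     dc_cmp X f (dc_cmp X g f) = f \<and>
     dc_cmp X g (dc_cmp X f g) = g \<and>
     dc_dag X (dc_cmp X f g) = dc_cmp X f g \<and>
     dc_dag X (dc_cmp X g f) = dc_cmp X g f"

definition mp_dagger_additive_category :: "('o, 'm, 'z) dac_scheme \<Rightarrow> bool" where
  "mp_dagger_additive_category X \<longleftrightarrow> dagger_additive_category X \<and>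
     (\<forall>f \<in> dc_Arr X. \<exists>g. mp_inverse X f g)"

text \<open>The 2x2 matrix [[a, b],[c, d]] : B \<oplus> C \<rightarrow> B \<oplus> C with a : B\<rightarrow>B, b : C\<rightarrow>B,
  c : B\<rightarrow>C, d : C\<rightarrow>C, i.e. i1 a p1 + i1 b p2 + i2 c p1 + i2 d p2.\<close>
definition mat2 :: "('o, 'm, 'z) dac_scheme \<Rightarrow> 'o \<Rightarrow> 'o \<Rightarrow> 'm \<Rightarrow> 'm \<Rightarrow> 'm \<Rightarrow> 'm \<Rightarrow> 'm" where
  "mat2 X B C a b c d =
     dc_plus X
       (dc_plus X (dc_cmp X (dc_inj1 X B C) (dc_cmp X a (dc_prj1 X B C)))
                  (dc_cmp X (dc_inj1 X B C) (dc_cmp X b (dc_prj2 X B C))))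
       (dc_plus X (dc_cmp X (dc_inj2 X B C) (dc_cmp X c (dc_prj1 X B C)))
                  (dc_cmp X (dc_inj2 X B C) (dc_cmp X d (dc_prj2 X B C))))"

definition conditional_generator ::
  "('o, 'm, 'z) dac_scheme \<Rightarrow> 'o \<Rightarrow> 'o \<Rightarrow> 'm \<Rightarrow> 'm \<Rightarrow> 'm \<Rightarrow> 'm \<Rightarrow> bool" where
  "conditional_generator X B C \<alpha> \<beta> \<delta> m \<longleftrightarrow>
     m \<in> dc_hom X B C \<and>
     dc_cmp X m \<alpha> = dc_dag X \<beta> \<and>
     dagger_positive X C (dc_plus X \<delta> (dc_neg X (dc_cmp X m \<beta>)))"

end

theory Submission
  imports Defs
begin

locale mpd =
  fixes X :: "('o, 'm, 'z) dac_scheme"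
  assumes mp: "mp_dagger_additive_category X"
begin

abbreviation cmp (infixr "\<cdot>" 70) where "g \<cdot> f \<equiv> dc_cmp X g f"
abbreviation dg ("_\<^sup>d" [1000] 1000) where "f\<^sup>d \<equiv> dc_dag X f"
abbreviation pl (infixl "\<oplus>" 65) where "f \<oplus> g \<equiv> dc_plus X f g"
abbreviation ng where "ng f \<equiv> dc_neg X f"
abbreviation hom where "hom \<equiv> dc_hom X"
abbreviation zr where "zr \<equiv> dc_zero X"

lemma cat: "is_category X" and dag: "is_dagger X" and add: "is_additive_hom X"
  and bip: "has_dagger_biproducts X"
  using mp unfolding mp_dagger_additive_category_def dagger_additive_category_def by auto

lemma homD: "f \<in> hom A B \<Longrightarrow> A \<in> dc_Obj X \<and> B \<in> dc_Obj X \<and> f \<in> dc_Arr X"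
  using cat unfolding is_category_def dc_hom_def by auto

lemma cmp_hom: assumes f: "f \<in> hom A B" and g: "g \<in> hom B C" shows "g \<cdot> f \<in> hom A C"
  using cat homD[OF f] homD[OF g] f g unfolding is_category_def by blast

lemma assoc: assumes f: "f \<in> hom A B" and g: "g \<in> hom B C" and h: "h \<in> hom C D"
  shows "h \<cdot> (g \<cdot> f) = (h \<cdot> g) \<cdot> f"
proof -
  have "\<forall>A \<in> dc_Obj X. \<forall>B \<in> dc_Obj X. \<forall>C \<in> dc_Obj X. \<forall>D \<in> dc_Obj X.
        \<forall>f \<in> dc_hom X A B. \<forall>g \<in> dc_hom X B C. \<forall>h \<in> dc_hom X C D.
        dc_cmp X h (dc_cmp X g f) = dc_cmp X (dc_cmp X h g) f" using cat unfolding is_category_def by blast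
  then show ?thesis using homD[OF f] homD[OF g] homD[OF h] f g h by blast
qed

lemma id_l: assumes f: "f \<in> hom A B" shows "dc_id X B \<cdot> f = f"
  using cat homD[OF f] f unfolding is_category_def by blast
lemma id_r: assumes f: "f \<in> hom A B" shows "f \<cdot> dc_id X A = f"
  using cat homD[OF f] f unfolding is_category_def by blast

lemma dag_hom: assumes f: "f \<in> hom A B" shows "f\<^sup>d \<in> hom B A"
  using dag homD[OF f] f unfolding is_dagger_def by blast
lemma dag_dag: assumes f: "f \<in> hom A B" shows "f\<^sup>d\<^sup>d = f"
  using dag homD[OF f] f unfolding is_dagger_def by blast
lemma dag_cmp: assumes f: "f \<in> hom A B" and g: "g \<in> hom B C" shows "(g \<cdot> f)\<^sup>d = f\<^sup>d \<cdot> g\<^sup>d"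
  using dag homD[OF f] homD[OF g] f g unfolding is_dagger_def by blast

lemma zero_hom: "A \<in> dc_Obj X \<Longrightarrow> B \<in> dc_Obj X \<Longrightarrow> zr A B \<in> hom A B"
  using add unfolding is_additive_hom_def by blast
lemma neg_hom: assumes f: "f \<in> hom A B" shows "ng f \<in> hom A B"
  using add homD[OF f] f unfolding is_additive_hom_def by blast
lemma plus_zero: assumes f: "f \<in> hom A B" shows "f \<oplus> zr A B = f"
  using add homD[OF f] f unfolding is_additive_hom_def by blast
lemma plus_neg: assumes f: "f \<in> hom A B" shows "f \<oplus> ng f = zr A B"
  using add homD[OF f] f unfolding is_additive_hom_def by blast
lemma plus_hom: assumes f: "f \<in> hom A B" and g: "g \<in> hom A B" shows "f \<oplus> g \<in> hom A B"
  using add homD[OF f] f g unfolding is_additive_hom_def by blast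
lemma plus_comm: assumes f: "f \<in> hom A B" and g: "g \<in> hom A B" shows "f \<oplus> g = g \<oplus> f"
  using add homD[OF f] f g unfolding is_additive_hom_def by blast
lemma dag_plus: assumes f: "f \<in> hom A B" and g: "g \<in> hom A B" shows "(f \<oplus> g)\<^sup>d = f\<^sup>d \<oplus> g\<^sup>d"
  using add homD[OF f] f g unfolding is_additive_hom_def by blast
lemma plus_assoc: assumes f: "f \<in> hom A B" and g: "g \<in> hom A B" and h: "h \<in> hom A B"
  shows "(f \<oplus> g) \<oplus> h = f \<oplus> (g \<oplus> h)"
  using add homD[OF f] f g h unfolding is_additive_hom_def by blast
lemma cmp_plus_r: assumes f: "f \<in> hom A B" and f': "f' \<in> hom A B" and g: "g \<in> hom B C"
  shows "g \<cdot> (f \<oplus> f') = g \<cdot> f \<oplus> g \<cdot> f'"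
  using add homD[OF f] homD[OF g] f f' g unfolding is_additive_hom_def by blast
lemma cmp_plus_l: assumes f: "f \<in> hom A B" and g: "g \<in> hom B C" and g': "g' \<in> hom B C"
  shows "(g \<oplus> g') \<cdot> f = g \<cdot> f \<oplus> g' \<cdot> f"
  using add homD[OF f] homD[OF g] f g' g unfolding is_additive_hom_def by blast

lemma bipD:
  assumes "A \<in> dc_Obj X" "B \<in> dc_Obj X"
  shows "dc_bip X A B \<in> dc_Obj X \<and>
        dc_prj1 X A B \<in> hom (dc_bip X A B) A \<and>
        dc_prj2 X A B \<in> hom (dc_bip X A B) B \<and>
        dc_inj1 X A B \<in> hom A (dc_bip X A B) \<and>
        dc_inj2 X A B \<in> hom B (dc_bip X A B) \<and>
        dc_prj1 X A B \<cdot> dc_inj1 X A B = dc_id X A \<and>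
        dc_prj2 X A B \<cdot> dc_inj2 X A B = dc_id X B \<and>
        dc_prj1 X A B \<cdot> dc_inj2 X A B = zr B A \<and>
        dc_prj2 X A B \<cdot> dc_inj1 X A B = zr A B \<and>
        (dc_prj1 X A B)\<^sup>d = dc_inj1 X A B \<and>
        (dc_prj2 X A B)\<^sup>d = dc_inj2 X A B"
  using bip assms unfolding has_dagger_biproducts_def by blast

lemma zero_plus: assumes f: "f \<in> hom A B" shows "zr A B \<oplus> f = f"
  using plus_comm[OF zero_hom f] plus_zero[OF f] homD[OF f] by simp

lemma cancel_l: assumes a: "a \<in> hom A B" and x: "x \<in> hom A B" and y: "y \<in> hom A B"
  and e: "a \<oplus> x = a \<oplus> y" shows "x = y"
proof -
  have n: "ng a \<in> hom A B" using neg_hom[OF a] .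
  have "x = (ng a \<oplus> a) \<oplus> x" using plus_comm[OF a n] plus_neg[OF a] zero_plus[OF x] by simp
  also have "\<dots> = ng a \<oplus> (a \<oplus> x)" using plus_assoc[OF n a x] .
  also have "\<dots> = ng a \<oplus> (a \<oplus> y)" using e by simp
  also have "\<dots> = (ng a \<oplus> a) \<oplus> y" using plus_assoc[OF n a y] by simp
  also have "\<dots> = y" using plus_comm[OF a n] plus_neg[OF a] zero_plus[OF y] by simp
  finally show ?thesis .
qed

lemma neg_unique: assumes a: "a \<in> hom A B" and b: "b \<in> hom A B" and e: "a \<oplus> b = zr A B"
  shows "b = ng a"
  using cancel_l[OF a b neg_hom[OF a]] e plus_neg[OF a] by simp

lemma neg_neg: assumes a: "a \<in> hom A B" shows "ng (ng a) = a"
  using neg_unique[OF neg_hom[OF a] a] plus_comm[OF a neg_hom[OF a]] plus_neg[OF a] by simp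

lemma zero_idem: assumes a: "a \<in> hom A B" and e: "a \<oplus> a = a" shows "a = zr A B"
proof -
  have z: "zr A B \<in> hom A B" using zero_hom homD[OF a] by blast
  show ?thesis using cancel_l[OF a a z] e plus_zero[OF a] by simp
qed

lemma cmp_zero_r: assumes g: "g \<in> hom B C" and A: "A \<in> dc_Obj X" shows "g \<cdot> zr A B = zr A C"
proof -
  have z: "zr A B \<in> hom A B" using zero_hom homD[OF g] A by blast
  have "g \<cdot> zr A B \<oplus> g \<cdot> zr A B = g \<cdot> zr A B"
    using cmp_plus_r[OF z z g] plus_zero[OF z] by simp
  then show ?thesis using zero_idem[OF cmp_hom[OF z g]] by simp
qed

lemma cmp_zero_l: assumes f: "f \<in> hom A B" and C: "C \<in> dc_Obj X" shows "zr B C \<cdot> f = zr A C"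
proof -
  have z: "zr B C \<in> hom B C" using zero_hom homD[OF f] C by blast
  have "zr B C \<cdot> f \<oplus> zr B C \<cdot> f = zr B C \<cdot> f"
    using cmp_plus_l[OF f z z] plus_zero[OF z] by simp
  then show ?thesis using zero_idem[OF cmp_hom[OF f z]] by simp
qed

lemma cmp_neg_r: assumes f: "f \<in> hom A B" and g: "g \<in> hom B C" shows "g \<cdot> ng f = ng (g \<cdot> f)"
proof -
  have "g \<cdot> f \<oplus> g \<cdot> ng f = zr A C"
    using cmp_plus_r[OF f neg_hom[OF f] g] plus_neg[OF f] cmp_zero_r[OF g] homD[OF f] by simp
  then show ?thesis using neg_unique[OF cmp_hom[OF f g] cmp_hom[OF neg_hom[OF f] g]] by simp
qed

lemma cmp_neg_l: assumes f: "f \<in> hom A B" and g: "g \<in> hom B C" shows "ng g \<cdot> f = ng (g \<cdot> f)"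
proof -
  have "g \<cdot> f \<oplus> ng g \<cdot> f = zr A C"
    using cmp_plus_l[OF f g neg_hom[OF g]] plus_neg[OF g] cmp_zero_l[OF f] homD[OF g] by simp
  then show ?thesis using neg_unique[OF cmp_hom[OF f g] cmp_hom[OF f neg_hom[OF g]]] by simp
qed

lemma dag_zero: assumes A: "A \<in> dc_Obj X" and B: "B \<in> dc_Obj X" shows "(zr A B)\<^sup>d = zr B A"
proof -
  have z: "zr A B \<in> hom A B" using zero_hom A B by blast
  have "(zr A B)\<^sup>d \<oplus> (zr A B)\<^sup>d = (zr A B)\<^sup>d" using dag_plus[OF z z] plus_zero[OF z] by simp
  then show ?thesis using zero_idem[OF dag_hom[OF z]] by simp
qed

lemma dag_neg: assumes f: "f \<in> hom A B" shows "(ng f)\<^sup>d = ng (f\<^sup>d)"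
proof -
  have "f\<^sup>d \<oplus> (ng f)\<^sup>d = zr B A"
    using dag_plus[OF f neg_hom[OF f]] plus_neg[OF f] dag_zero homD[OF f] by simp
  then show ?thesis using neg_unique[OF dag_hom[OF f] dag_hom[OF neg_hom[OF f]]] by simp
qed

lemma slide: assumes u: "u \<in> hom Y S" and x: "x \<in> hom W Y" and p: "p \<in> hom S W" and v: "v \<in> hom V S"
  shows "(u \<cdot> (x \<cdot> p)) \<cdot> v = u \<cdot> (x \<cdot> (p \<cdot> v))"
  using assoc[OF v cmp_hom[OF p x] u] assoc[OF v p x] by simp

lemma proj_pair:
  assumes B: "B \<in> dc_Obj X" and C: "C \<in> dc_Obj X" and x: "x \<in> hom W B" and y: "y \<in> hom W C"
  shows "dc_prj1 X B C \<cdot> (dc_inj1 X B C \<cdot> x \<oplus> dc_inj2 X B C \<cdot> y) = x"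
    and "dc_prj2 X B C \<cdot> (dc_inj1 X B C \<cdot> x \<oplus> dc_inj2 X B C \<cdot> y) = y"
proof -
  note bb = bipD[OF B C]
  define S where "S = dc_bip X B C"
  define i1 where "i1 = dc_inj1 X B C"
  define i2 where "i2 = dc_inj2 X B C"
  define p1 where "p1 = dc_prj1 X B C"
  define p2 where "p2 = dc_prj2 X B C"
  have S: "S \<in> dc_Obj X" and i1: "i1 \<in> hom B S" and i2: "i2 \<in> hom C S"
    and p1: "p1 \<in> hom S B" and p2: "p2 \<in> hom S C"
    and e11: "p1 \<cdot> i1 = dc_id X B" and e22: "p2 \<cdot> i2 = dc_id X C"
    and e12: "p1 \<cdot> i2 = zr C B" and e21: "p2 \<cdot> i1 = zr B C"
    using bb unfolding S_def i1_def i2_def p1_def p2_def by blast+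
  have i1x: "i1 \<cdot> x \<in> hom W S" using cmp_hom[OF x i1] .
  have i2y: "i2 \<cdot> y \<in> hom W S" using cmp_hom[OF y i2] .
  have "p1 \<cdot> (i1 \<cdot> x \<oplus> i2 \<cdot> y) = (p1 \<cdot> i1) \<cdot> x \<oplus> (p1 \<cdot> i2) \<cdot> y"
    using cmp_plus_r[OF i1x i2y p1] assoc[OF x i1 p1] assoc[OF y i2 p1] by simp
  also have "\<dots> = x" using e11 e12 id_l[OF x] cmp_zero_l[OF y B] plus_zero[OF x] by simp
  finally show "dc_prj1 X B C \<cdot> (dc_inj1 X B C \<cdot> x \<oplus> dc_inj2 X B C \<cdot> y) = x"
    unfolding p1_def i1_def i2_def .
  have "p2 \<cdot> (i1 \<cdot> x \<oplus> i2 \<cdot> y) = (p2 \<cdot> i1) \<cdot> x \<oplus> (p2 \<cdot> i2) \<cdot> y"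
    using cmp_plus_r[OF i1x i2y p2] assoc[OF x i1 p2] assoc[OF y i2 p2] by simp
  also have "\<dots> = y" using e21 e22 id_l[OF y] cmp_zero_l[OF x C] zero_plus[OF y] by simp
  finally show "dc_prj2 X B C \<cdot> (dc_inj1 X B C \<cdot> x \<oplus> dc_inj2 X B C \<cdot> y) = y"
    unfolding p2_def i1_def i2_def .
qed

lemma mat_col:
  assumes B: "B \<in> dc_Obj X" and C: "C \<in> dc_Obj X"
    and a: "a \<in> hom B B" and b: "b \<in> hom C B" and c: "c \<in> hom B C" and d: "d \<in> hom C C"
  shows "mat2 X B C a b c d \<cdot> dc_inj1 X B C = dc_inj1 X B C \<cdot> a \<oplus> dc_inj2 X B C \<cdot> c"
    and "mat2 X B C a b c d \<cdot> dc_inj2 X B C = dc_inj1 X B C \<cdot> b \<oplus> dc_inj2 X B C \<cdot> d"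
proof -
  note bb = bipD[OF B C]
  define S where "S = dc_bip X B C"
  define i1 where "i1 = dc_inj1 X B C"
  define i2 where "i2 = dc_inj2 X B C"
  define p1 where "p1 = dc_prj1 X B C"
  define p2 where "p2 = dc_prj2 X B C"
  have S: "S \<in> dc_Obj X" and i1: "i1 \<in> hom B S" and i2: "i2 \<in> hom C S"
    and p1: "p1 \<in> hom S B" and p2: "p2 \<in> hom S C"
    and e11: "p1 \<cdot> i1 = dc_id X B" and e22: "p2 \<cdot> i2 = dc_id X C"
    and e12: "p1 \<cdot> i2 = zr C B" and e21: "p2 \<cdot> i1 = zr B C"
    using bb unfolding S_def i1_def i2_def p1_def p2_def by blast+
  have t11: "i1 \<cdot> (a \<cdot> p1) \<in> hom S S" by (rule cmp_hom[OF cmp_hom[OF p1 a] i1])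
  have t12: "i1 \<cdot> (b \<cdot> p2) \<in> hom S S" by (rule cmp_hom[OF cmp_hom[OF p2 b] i1])
  have t21: "i2 \<cdot> (c \<cdot> p1) \<in> hom S S" by (rule cmp_hom[OF cmp_hom[OF p1 c] i2])
  have t22: "i2 \<cdot> (d \<cdot> p2) \<in> hom S S" by (rule cmp_hom[OF cmp_hom[OF p2 d] i2])
  have M: "mat2 X B C a b c d = (i1 \<cdot> (a \<cdot> p1) \<oplus> i1 \<cdot> (b \<cdot> p2)) \<oplus> (i2 \<cdot> (c \<cdot> p1) \<oplus> i2 \<cdot> (d \<cdot> p2))"
    unfolding mat2_def i1_def i2_def p1_def p2_def ..
  have dist: "\<And>v V. v \<in> hom V S \<Longrightarrow> mat2 X B C a b c d \<cdot> v =
     ((i1 \<cdot> (a \<cdot> p1)) \<cdot> v \<oplus> (i1 \<cdot> (b \<cdot> p2)) \<cdot> v) \<oplus> ((i2 \<cdot> (c \<cdot> p1)) \<cdot> v \<oplus> (i2 \<cdot> (d \<cdot> p2)) \<cdot> v)"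
  proof -
    fix v V assume v: "v \<in> hom V S"
    show "mat2 X B C a b c d \<cdot> v =
     ((i1 \<cdot> (a \<cdot> p1)) \<cdot> v \<oplus> (i1 \<cdot> (b \<cdot> p2)) \<cdot> v) \<oplus> ((i2 \<cdot> (c \<cdot> p1)) \<cdot> v \<oplus> (i2 \<cdot> (d \<cdot> p2)) \<cdot> v)"
      unfolding M using cmp_plus_l[OF v plus_hom[OF t11 t12] plus_hom[OF t21 t22]]
        cmp_plus_l[OF v t11 t12] cmp_plus_l[OF v t21 t22] by simp
  qed
  have "mat2 X B C a b c d \<cdot> i1 = (i1 \<cdot> a \<oplus> zr B S) \<oplus> (i2 \<cdot> c \<oplus> zr B S)"
    unfolding dist[OF i1] slide[OF i1 a p1 i1] slide[OF i1 b p2 i1] slide[OF i2 c p1 i1] slide[OF i2 d p2 i1]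
    using e11 e21 id_r[OF a] id_r[OF c] cmp_zero_r[OF b B] cmp_zero_r[OF d B] cmp_zero_r[OF i1 B] cmp_zero_r[OF i2 B]
    by simp
  also have "\<dots> = i1 \<cdot> a \<oplus> i2 \<cdot> c" using plus_zero[OF cmp_hom[OF a i1]] plus_zero[OF cmp_hom[OF c i2]] by simp
  finally show "mat2 X B C a b c d \<cdot> dc_inj1 X B C = dc_inj1 X B C \<cdot> a \<oplus> dc_inj2 X B C \<cdot> c"
    unfolding i1_def i2_def .
  have "mat2 X B C a b c d \<cdot> i2 = (zr C S \<oplus> i1 \<cdot> b) \<oplus> (zr C S \<oplus> i2 \<cdot> d)"
    unfolding dist[OF i2] slide[OF i1 a p1 i2] slide[OF i1 b p2 i2] slide[OF i2 c p1 i2] slide[OF i2 d p2 i2]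
    using e22 e12 id_r[OF b] id_r[OF d] cmp_zero_r[OF a C] cmp_zero_r[OF c C] cmp_zero_r[OF i1 C] cmp_zero_r[OF i2 C]
    by simp
  also have "\<dots> = i1 \<cdot> b \<oplus> i2 \<cdot> d" using zero_plus[OF cmp_hom[OF b i1]] zero_plus[OF cmp_hom[OF d i2]] by simp
  finally show "mat2 X B C a b c d \<cdot> dc_inj2 X B C = dc_inj1 X B C \<cdot> b \<oplus> dc_inj2 X B C \<cdot> d"
    unfolding i1_def i2_def .
qed

lemma mat_entries:
  assumes B: "B \<in> dc_Obj X" and C: "C \<in> dc_Obj X"
    and a: "a \<in> hom B B" and b: "b \<in> hom C B" and c: "c \<in> hom B C" and d: "d \<in> hom C C"
  shows "dc_prj1 X B C \<cdot> (mat2 X B C a b c d \<cdot> dc_inj1 X B C) = a"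
    and "dc_prj1 X B C \<cdot> (mat2 X B C a b c d \<cdot> dc_inj2 X B C) = b"
    and "dc_prj2 X B C \<cdot> (mat2 X B C a b c d \<cdot> dc_inj2 X B C) = d"
  using mat_col[OF assms] proj_pair[OF B C a c] proj_pair[OF B C b d] by simp_all

lemma gram: assumes ph: "ph \<in> hom S D" and u: "u \<in> hom U S" and v: "v \<in> hom V S"
  shows "u\<^sup>d \<cdot> ((ph\<^sup>d \<cdot> ph) \<cdot> v) = (ph \<cdot> u)\<^sup>d \<cdot> (ph \<cdot> v)"
proof -
  have "u\<^sup>d \<cdot> ((ph\<^sup>d \<cdot> ph) \<cdot> v) = u\<^sup>d \<cdot> (ph\<^sup>d \<cdot> (ph \<cdot> v))"
    using assoc[OF v ph dag_hom[OF ph]] by simp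
  also have "\<dots> = (u\<^sup>d \<cdot> ph\<^sup>d) \<cdot> (ph \<cdot> v)"
    using assoc[OF cmp_hom[OF v ph] dag_hom[OF ph] dag_hom[OF u]] .
  also have "\<dots> = (ph \<cdot> u)\<^sup>d \<cdot> (ph \<cdot> v)" using dag_cmp[OF u ph] by simp
  finally show ?thesis .
qed

lemma main:
  assumes B: "B \<in> dc_Obj X" and C: "C \<in> dc_Obj X"
    and al: "\<alpha> \<in> hom B B" and be: "\<beta> \<in> hom C B" and de: "\<delta> \<in> hom C C"
    and pos: "dagger_positive X (dc_bip X B C) (mat2 X B C \<alpha> \<beta> (\<beta>\<^sup>d) \<delta>)"
    and mpa: "mp_inverse X \<alpha> ao"
  shows "conditional_generator X B C \<alpha> \<beta> \<delta> (\<beta>\<^sup>d \<cdot> ao)"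
proof -
  note bb = bipD[OF B C]
  define S where "S = dc_bip X B C"
  define i1 where "i1 = dc_inj1 X B C"
  define i2 where "i2 = dc_inj2 X B C"
  define p1 where "p1 = dc_prj1 X B C"
  define p2 where "p2 = dc_prj2 X B C"
  have S: "S \<in> dc_Obj X" and i1: "i1 \<in> hom B S" and i2: "i2 \<in> hom C S"
    and p1: "p1 \<in> hom S B" and p2: "p2 \<in> hom S C"
    and d1: "p1\<^sup>d = i1" and d2: "p2\<^sup>d = i2"
    using bb unfolding S_def i1_def i2_def p1_def p2_def by blast+
  have p1d: "p1 = i1\<^sup>d" using dag_dag[OF p1] d1 by simp
  have p2d: "p2 = i2\<^sup>d" using dag_dag[OF p2] d2 by simp
  obtain D ph where D: "D \<in> dc_Obj X" and ph: "ph \<in> hom S D"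
    and M: "mat2 X B C \<alpha> \<beta> (\<beta>\<^sup>d) \<delta> = ph\<^sup>d \<cdot> ph"
    using pos unfolding dagger_positive_def S_def by blast
  define f where "f = ph \<cdot> i1"
  define g where "g = ph \<cdot> i2"
  have f: "f \<in> hom B D" unfolding f_def using cmp_hom[OF i1 ph] .
  have g: "g \<in> hom C D" unfolding g_def using cmp_hom[OF i2 ph] .
  note ent = mat_entries[OF B C al be dag_hom[OF be] de, unfolded M, folded i1_def i2_def p1_def p2_def]
  have aff: "\<alpha> = f\<^sup>d \<cdot> f" using ent(1) gram[OF ph i1 i1] unfolding p1d f_def by simp
  have bfg: "\<beta> = f\<^sup>d \<cdot> g" using ent(2) gram[OF ph i1 i2] unfolding p1d f_def g_def by simp
  have dgg: "\<delta> = g\<^sup>d \<cdot> g" using ent(3) gram[OF ph i2 i2] unfolding p2d g_def by simp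
  have fA: "f \<in> dc_Arr X" using homD[OF f] by blast
  obtain fo where mpf: "mp_inverse X f fo" using mp fA unfolding mp_dagger_additive_category_def by blast
  have fo: "fo \<in> hom D B" using mpf f unfolding mp_inverse_def dc_hom_def by auto
  have F1: "f \<cdot> (fo \<cdot> f) = f" and F2: "fo \<cdot> (f \<cdot> fo) = fo" and F3: "(f \<cdot> fo)\<^sup>d = f \<cdot> fo"
    using mpf unfolding mp_inverse_def by auto
  have ao: "ao \<in> hom B B" using mpa al unfolding mp_inverse_def dc_hom_def by auto
  have A1: "\<alpha> \<cdot> (ao \<cdot> \<alpha>) = \<alpha>" using mpa unfolding mp_inverse_def by auto
  have ad: "\<alpha>\<^sup>d = \<alpha>" using aff dag_cmp[OF f dag_hom[OF f]] dag_dag[OF f] by simp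
  have ffo: "f = fo\<^sup>d \<cdot> \<alpha>"
  proof -
    have "f = (f \<cdot> fo) \<cdot> f" using F1 assoc[OF f fo f] by simp
    also have "\<dots> = (fo\<^sup>d \<cdot> f\<^sup>d) \<cdot> f" using F3 dag_cmp[OF fo f] by simp
    also have "\<dots> = fo\<^sup>d \<cdot> \<alpha>" using assoc[OF f dag_hom[OF f] dag_hom[OF fo]] aff by simp
    finally show ?thesis .
  qed
  have fd: "f\<^sup>d = \<alpha> \<cdot> fo"
    using arg_cong[OF ffo, of "dc_dag X"] dag_cmp[OF al dag_hom[OF fo]] dag_dag[OF fo] ad by simp
  have bd: "\<beta>\<^sup>d = g\<^sup>d \<cdot> f" using bfg dag_cmp[OF g dag_hom[OF f]] dag_dag[OF f] by simp
  define m where "m = \<beta>\<^sup>d \<cdot> ao"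
  have m: "m \<in> hom B C" unfolding m_def using cmp_hom[OF ao dag_hom[OF be]] .
  have i: "m \<cdot> \<alpha> = \<beta>\<^sup>d"
  proof -
    have "m \<cdot> \<alpha> = g\<^sup>d \<cdot> (f \<cdot> (ao \<cdot> \<alpha>))"
      unfolding m_def bd using assoc[OF al ao cmp_hom[OF f dag_hom[OF g]]]
        assoc[OF cmp_hom[OF al ao] f dag_hom[OF g]] by simp
    also have "\<dots> = g\<^sup>d \<cdot> (fo\<^sup>d \<cdot> (\<alpha> \<cdot> (ao \<cdot> \<alpha>)))"
      using arg_cong[OF ffo, of "\<lambda>t. g\<^sup>d \<cdot> (t \<cdot> (ao \<cdot> \<alpha>))"] assoc[OF cmp_hom[OF al ao] al dag_hom[OF fo]]
      by simp
    also have "\<dots> = \<beta>\<^sup>d" using A1 ffo bd by simp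
    finally show ?thesis .
  qed
  define P where "P = f \<cdot> fo"
  have P: "P \<in> hom D D" unfolding P_def using cmp_hom[OF fo f] .
  have Pd: "P\<^sup>d = P" unfolding P_def using F3 .
  have PP: "P \<cdot> P = P" unfolding P_def using F2 assoc[OF cmp_hom[OF fo f] fo f] by metis
  have K: "f \<cdot> (ao \<cdot> f\<^sup>d) = P"
  proof -
    have "f \<cdot> (ao \<cdot> f\<^sup>d) = fo\<^sup>d \<cdot> (\<alpha> \<cdot> (ao \<cdot> (\<alpha> \<cdot> fo)))"
      using ffo fd assoc[OF cmp_hom[OF fo al] ao al] assoc[OF cmp_hom[OF cmp_hom[OF fo al] ao] al dag_hom[OF fo]]
      by (metis (no_types))
    also have "\<dots> = fo\<^sup>d \<cdot> (\<alpha> \<cdot> fo)"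
      using assoc[OF fo al ao] assoc[OF fo cmp_hom[OF al ao] al] A1 assoc[OF al ao al] by simp
    also have "\<dots> = (fo\<^sup>d \<cdot> f\<^sup>d) \<cdot> (f \<cdot> fo)"
      using aff assoc[OF fo f dag_hom[OF f]] assoc[OF cmp_hom[OF fo f] dag_hom[OF f] dag_hom[OF fo]] by simp
    also have "\<dots> = P" using dag_cmp[OF fo f] Pd PP unfolding P_def by simp
    finally show ?thesis .
  qed
  define x where "x = g\<^sup>d \<cdot> (P \<cdot> g)"
  have x: "x \<in> hom C C" unfolding x_def using cmp_hom[OF cmp_hom[OF g P] dag_hom[OF g]] .
  have mb: "m \<cdot> \<beta> = x"
  proof -
    have "m \<cdot> \<beta> = ((g\<^sup>d \<cdot> f) \<cdot> ao) \<cdot> (f\<^sup>d \<cdot> g)" unfolding m_def bd by (simp only: bfg[symmetric])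
    also have "\<dots> = (g\<^sup>d \<cdot> f) \<cdot> (ao \<cdot> (f\<^sup>d \<cdot> g))"
      using assoc[OF cmp_hom[OF g dag_hom[OF f]] ao cmp_hom[OF f dag_hom[OF g]]] by simp
    also have "\<dots> = g\<^sup>d \<cdot> (f \<cdot> (ao \<cdot> (f\<^sup>d \<cdot> g)))"
      using assoc[OF cmp_hom[OF cmp_hom[OF g dag_hom[OF f]] ao] f dag_hom[OF g]] by simp
    also have "\<dots> = g\<^sup>d \<cdot> ((f \<cdot> (ao \<cdot> f\<^sup>d)) \<cdot> g)"
      using assoc[OF g dag_hom[OF f] ao] assoc[OF g cmp_hom[OF dag_hom[OF f] ao] f] by simp
    also have "\<dots> = x" unfolding K x_def ..
    finally show ?thesis .
  qed
  define \<psi> where "\<psi> = g \<oplus> ng (P \<cdot> g)"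
  have Pg: "P \<cdot> g \<in> hom C D" using cmp_hom[OF g P] .
  have nPg: "ng (P \<cdot> g) \<in> hom C D" using neg_hom[OF Pg] .
  have psi: "\<psi> \<in> hom C D" unfolding \<psi>_def using plus_hom[OF g nPg] .
  have gP: "g\<^sup>d \<cdot> P \<in> hom D C" using cmp_hom[OF P dag_hom[OF g]] .
  have psid: "\<psi>\<^sup>d = g\<^sup>d \<oplus> ng (g\<^sup>d \<cdot> P)"
    unfolding \<psi>_def using dag_plus[OF g nPg] dag_neg[OF Pg] dag_cmp[OF g P] Pd by simp
  have xx: "\<psi>\<^sup>d \<cdot> (P \<cdot> g) = zr C C"
  proof -
    have "\<psi>\<^sup>d \<cdot> (P \<cdot> g) = x \<oplus> ng ((g\<^sup>d \<cdot> P) \<cdot> (P \<cdot> g))"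
      unfolding psid x_def using cmp_plus_l[OF Pg dag_hom[OF g] neg_hom[OF gP]] cmp_neg_l[OF Pg gP] by simp
    also have "(g\<^sup>d \<cdot> P) \<cdot> (P \<cdot> g) = x"
      unfolding x_def using assoc[OF Pg P dag_hom[OF g]] assoc[OF g P P] PP by simp
    finally show ?thesis using plus_neg[OF x] by simp
  qed
  have "\<psi>\<^sup>d \<cdot> \<psi> = (g\<^sup>d \<cdot> g \<oplus> ng x) \<oplus> ng (zr C C)"
    unfolding \<psi>_def[symmetric]
    using cmp_plus_r[OF g nPg dag_hom[OF psi]] cmp_neg_r[OF Pg dag_hom[OF psi]] xx
      psid cmp_plus_l[OF g dag_hom[OF g] neg_hom[OF gP]] cmp_neg_l[OF g gP]
      assoc[OF g P dag_hom[OF g]] x_def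
    by (simp add: \<psi>_def)
  also have "ng (zr C C) = zr C C" using neg_unique[OF zero_hom zero_hom] plus_zero[OF zero_hom] C by metis
  finally have pp: "\<psi>\<^sup>d \<cdot> \<psi> = \<delta> \<oplus> ng (m \<cdot> \<beta>)"
    using plus_zero[OF plus_hom[OF cmp_hom[OF g dag_hom[OF g]] neg_hom[OF x]]] dgg mb by simp
  show ?thesis unfolding conditional_generator_def dagger_positive_def m_def[symmetric]
    using m i pp D psi by metis
qed

end

theorem mainTheorem10:
  fixes X :: "('o, 'm, 'z) dac_scheme"
  assumes "mp_dagger_additive_category X"
    and "B \<in> dc_Obj X" and "C \<in> dc_Obj X"
    and "\<alpha> \<in> dc_hom X B B" and "\<beta> \<in> dc_hom X C B" and "\<delta> \<in> dc_hom X C C"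
    and "dagger_positive X (dc_bip X B C) (mat2 X B C \<alpha> \<beta> (dc_dag X \<beta>) \<delta>)"
    and "mp_inverse X \<alpha> \<alpha>o"
  shows "conditional_generator X B C \<alpha> \<beta> \<delta> (dc_cmp X (dc_dag X \<beta>) \<alpha>o)"
proof -
  interpret mpd X by unfold_locales (rule assms(1))
  show ?thesis using main assms by blast
qed

end
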